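(* Let $q$ be a prime power and $m\ge1$. For every Reed–Solomon code $\mathcal{C}$ over $\mathbb{F}_{q^m}$, every generalized subfield subcode of $\mathcal{C}$ is an alternant code over $\mathbb{F}_q$ (defined from a generalized Reed–Solomon code over $\mathbb{F}_{q^m}$); conversely, every such alternant code is a generalized subfield subcode of some Reed–Solomon code over $\mathbb{F}_{q^m}$. That is, the generalized subfield subcodes of Reed–Solomon codes are exactly the alternant codes.
   Context: Reed–Solomon code: for $1\le k\le n$ and pairwise distinct $a_1,\dots,a_n\in\mathbb{F}_{q^m}$, $RS_k(a)=\{(g(a_1),\dots,g(a_n)) : g\in\mathbb{F}_{q^m}[X],\ \deg g<k\}$. Generalized Reed–Solomon code: the image of a Reed–Solomon code under right multiplication by an $n\times n$ monomial matrix over $\mathbb{F}_{q^m}$, i.e. $\{(v_1g(a_1),\dots,v_ng(a_n)):\deg g<k\}$ with all $v_i\neq0$. Alternant code: $\mathcal{D}\cap\mathbb{F}_q^n$ for a generalized Reed–Solomon code $\mathcal{D}$ over $\mathbb{F}_{q^m}$. Generalized subfield subcode: for a basis $\mathcal{B}=(b_1,\dots,b_m)$ of $\mathbb{F}_{q^m}$ over $\mathbb{F}_q$, let $\phi_{\mathcal{B}}(\sum_i x_ib_i)=(x_1,\dots,x_m)$ and $Im_q(\mathcal{C})=\{(\phi_{\mathcal{B}}(c_1)|\cdots|\phi_{\mathcal{B}}(c_n)):c\in\mathcal{C}\}\subseteq(\mathbb{F}_q^m)^n$. For $f=(f_1,\dots,f_n)\in GL_q(m)^n$ (the $\mathbb{F}_q$-linear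 automorphisms of $\mathbb{F}_q^m$) and a permutation $\pi$ of $\{1,\dots,n\}$, $mon=\pi\circ f$ applies $f_i$ to the $i$-th block and then permutes blocks by $\pi$. For $u\in\{1,\dots,m\}^n$ and $D\subseteq(\mathbb{F}_q^m)^n$, with $x_{j,l}$ the $l$-th coordinate of block $j$, $S_u(D)=\{(x_{1,u_1},\dots,x_{n,u_n}):x\in D,\ x_{j,l}=0\ \forall j,\forall l\ne u_j\}$. The generalized subfield subcodes of $\mathcal{C}$ are the codes $S_u(mon(Im_q(\mathcal{C})))$ for all choices of $\mathcal{B},u,f,\pi$. *)

theory Defs
  imports "HOL-Computational_Algebra.Polynomial" "HOL-Combinatorics.Permutations"
begin

text \<open>The big field F_{q^m} is a finite field type 'a; F_q is a subfield K of it.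
Vectors/codewords are lists; codes are sets of lists.\<close>

definition is_subfield :: "'a::field set \<Rightarrow> bool" where
  "is_subfield K \<longleftrightarrow> 0 \<in> K \<and> 1 \<in> K \<and> (\<forall>x\<in>K. \<forall>y\<in>K. x + y \<in> K \<and> x * y \<in> K)
     \<and> (\<forall>x\<in>K. - x \<in> K \<and> inverse x \<in> K)"

definition RS :: "'a::field list \<Rightarrow> nat \<Rightarrow> 'a list set" where
  "RS a k = {map (poly g) a | g. degree g < k}"

definition is_RS :: "nat \<Rightarrow> 'a::field list set \<Rightarrow> bool" where
  "is_RS n C \<longleftrightarrow> (\<exists>a k. length a = n \<and> distinct a \<and> 1 \<le> k \<and> k \<le> n \<and> C = RS a k)"

definition GRS :: "'a::field list \<Rightarrow> 'a list \<Rightarrow> nat \<Rightarrow> 'a list set" where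
  "GRS a v k = {map2 (*) v (map (poly g) a) | g. degree g < k}"

definition is_GRS :: "nat \<Rightarrow> 'a::field list set \<Rightarrow> bool" where
  "is_GRS n D \<longleftrightarrow> (\<exists>a v k. length a = n \<and> distinct a \<and> 1 \<le> k \<and> k \<le> n
      \<and> length v = n \<and> 0 \<notin> set v \<and> D = GRS a v k)"

definition alternant :: "'a set \<Rightarrow> 'a list set \<Rightarrow> 'a list set" where
  "alternant K D = {c \<in> D. set c \<subseteq> K}"

definition Kvecs :: "'a set \<Rightarrow> nat \<Rightarrow> 'a list set" where
  "Kvecs K m = {x. length x = m \<and> set x \<subseteq> K}"

definition is_basis :: "'a::field set \<Rightarrow> nat \<Rightarrow> 'a list \<Rightarrow> bool" where
  "is_basis K m B \<longleftrightarrow> length B = m \<and>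
     (\<forall>x. \<exists>!c. c \<in> Kvecs K m \<and> x = (\<Sum>i<m. c ! i * B ! i))"

definition phi :: "'a::field set \<Rightarrow> 'a list \<Rightarrow> 'a \<Rightarrow> 'a list" where
  "phi K B x = (THE c. c \<in> Kvecs K (length B) \<and> x = (\<Sum>i<length B. c ! i * B ! i))"

text \<open>Im_q(C): codewords expanded blockwise; an element of (F_q^m)^n is a list of n blocks.\<close>
definition Im_q :: "'a::field set \<Rightarrow> 'a list \<Rightarrow> 'a list set \<Rightarrow> 'a list list set" where
  "Im_q K B C = {map (phi K B) c | c. c \<in> C}"

text \<open>GL_q(m): F_q-linear automorphisms of F_q^m (only their action on Kvecs K m matters).\<close>
definition is_GL :: "'a::field set \<Rightarrow> nat \<Rightarrow> ('a list \<Rightarrow> 'a list) \<Rightarrow> bool" where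
  "is_GL K m g \<longleftrightarrow> bij_betw g (Kvecs K m) (Kvecs K m)
     \<and> (\<forall>x\<in>Kvecs K m. \<forall>y\<in>Kvecs K m. g (map2 (+) x y) = map2 (+) (g x) (g y))
     \<and> (\<forall>c\<in>K. \<forall>x\<in>Kvecs K m. g (map ((*) c) x) = map ((*) c) (g x))"

text \<open>mon = pi o f: apply f_i to block i, then move block i to position pi(i) (0-indexed).\<close>
definition mon :: "nat \<Rightarrow> (nat \<Rightarrow> 'a list \<Rightarrow> 'a list) \<Rightarrow> (nat \<Rightarrow> nat) \<Rightarrow> 'a list list set \<Rightarrow> 'a list list set" where
  "mon n f \<pi> X = {map (\<lambda>j. f (inv \<pi> j) (x ! (inv \<pi> j))) [0..<n] | x. x \<in> X}"

text \<open>S_u(D), with u j < m the selected (0-indexed) coordinate of block j.\<close>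
definition S_u :: "nat \<Rightarrow> nat \<Rightarrow> (nat \<Rightarrow> nat) \<Rightarrow> 'a::zero list list set \<Rightarrow> 'a list set" where
  "S_u n m u D = {map (\<lambda>j. x ! j ! u j) [0..<n] | x. x \<in> D \<and>
      (\<forall>j<n. \<forall>l<m. l \<noteq> u j \<longrightarrow> x ! j ! l = 0)}"

definition is_gen_subfield_subcode :: "'a::field set \<Rightarrow> nat \<Rightarrow> nat \<Rightarrow> 'a list set \<Rightarrow> 'a list set \<Rightarrow> bool" where
  "is_gen_subfield_subcode K m n C E \<longleftrightarrow> (\<exists>B u f \<pi>. is_basis K m B \<and> (\<forall>j<n. u j < m)
      \<and> (\<forall>i<n. is_GL K m (f i)) \<and> \<pi> permutes {0..<n}
      \<and> E = S_u n m u (mon n f \<pi> (Im_q K B C)))"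

end

theory Submission
  imports Defs
begin


definition comb :: "'a::field list \<Rightarrow> 'a list \<Rightarrow> 'a" where
  "comb B c = (\<Sum>i<length B. c ! i * B ! i)"

lemma sf_props:
  assumes "is_subfield K"
  shows "0 \<in> K" "1 \<in> K" "x \<in> K \<Longrightarrow> y \<in> K \<Longrightarrow> x + y \<in> K"
    "x \<in> K \<Longrightarrow> y \<in> K \<Longrightarrow> x * y \<in> K" "x \<in> K \<Longrightarrow> - x \<in> K"
    "x \<in> K \<Longrightarrow> inverse x \<in> K"
    "x \<in> K \<Longrightarrow> y \<in> K \<Longrightarrow> x - y \<in> K"
    "x \<in> K \<Longrightarrow> y \<in> K \<Longrightarrow> x / y \<in> K"
proof -
  note d = assms[unfolded is_subfield_def]
  show "0 \<in> K" "1 \<in> K" using d by blast+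
  show "x \<in> K \<Longrightarrow> y \<in> K \<Longrightarrow> x + y \<in> K" using d by blast
  show "x \<in> K \<Longrightarrow> y \<in> K \<Longrightarrow> x * y \<in> K" using d by blast
  show "x \<in> K \<Longrightarrow> - x \<in> K" using d by blast
  show "x \<in> K \<Longrightarrow> inverse x \<in> K" using d by blast
  show "x \<in> K \<Longrightarrow> y \<in> K \<Longrightarrow> x - y \<in> K"
    using d unfolding diff_conv_add_uminus by blast
  show "x \<in> K \<Longrightarrow> y \<in> K \<Longrightarrow> x / y \<in> K"
    using d unfolding divide_inverse by blast
qed

lemma card_Kvecs: "finite K \<Longrightarrow> card (Kvecs K d) = card K ^ d"
  unfolding Kvecs_def using card_lists_length_eq[of K d] by (simp add: conj_commute)

lemma finite_Kvecs: "finite K \<Longrightarrow> finite (Kvecs K d)"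
  unfolding Kvecs_def using finite_lists_length_eq[of K d] by (simp add: conj_commute)

lemma Kvecs_map_upt: "(\<And>i. i < d \<Longrightarrow> h i \<in> K) \<Longrightarrow> map h [0..<d] \<in> Kvecs K d"
  unfolding Kvecs_def by auto

lemma Kvecs_nth: "c \<in> Kvecs K d \<Longrightarrow> i < d \<Longrightarrow> c ! i \<in> K"
  unfolding Kvecs_def by auto

lemma comb_snoc:
  assumes "length c = Suc (length B)"
  shows "comb (B @ [x]) c = comb B (take (length B) c) + c ! length B * x"
  unfolding comb_def by (simp add: nth_append)

lemma ind_step:
  assumes sf: "is_subfield K" and inj: "inj_on (comb B) (Kvecs K (length B))"
    and x: "x \<notin> comb B ` Kvecs K (length B)"
  shows "inj_on (comb (B @ [x])) (Kvecs K (length (B @ [x])))"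
proof (rule inj_onI)
  let ?d = "length B"
  fix c c' assume c: "c \<in> Kvecs K (length (B @ [x]))" and c': "c' \<in> Kvecs K (length (B @ [x]))"
    and eq: "comb (B @ [x]) c = comb (B @ [x]) c'"
  have lc: "length c = Suc ?d" and lc': "length c' = Suc ?d" using c c' by (auto simp: Kvecs_def)
  have tK: "take ?d c \<in> Kvecs K ?d" "take ?d c' \<in> Kvecs K ?d"
    using c c' lc lc' by (auto simp: Kvecs_def dest: in_set_takeD)
  have cdK: "c ! ?d \<in> K" "c' ! ?d \<in> K" using c c' lc lc' unfolding Kvecs_def by auto
  have eq2: "comb B (take ?d c) + c ! ?d * x = comb B (take ?d c') + c' ! ?d * x"
    using eq comb_snoc[OF lc] comb_snoc[OF lc'] by simp
  show "c = c'"
  proof (cases "c ! ?d = c' ! ?d")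
    case True
    then have "comb B (take ?d c) = comb B (take ?d c')" using eq2 by simp
    then have tt: "take ?d c = take ?d c'" using inj_onD[OF inj _ tK] by blast
    show ?thesis
    proof (rule nth_equalityI)
      show "length c = length c'" using lc lc' by simp
      fix i assume "i < length c"
      then consider "i < ?d" | "i = ?d" using lc by linarith
      then show "c ! i = c' ! i"
      proof cases
        case 1
        have "c ! i = take ?d c ! i" using 1 by simp
        also have "\<dots> = take ?d c' ! i" using tt by simp
        also have "\<dots> = c' ! i" using 1 by simp
        finally show ?thesis .
      next
        case 2 then show ?thesis using True by (simp only:)
      qed
    qed
  next
    case False
    define s where "s = inverse (c' ! ?d - c ! ?d)"
    define p where "p = map (\<lambda>i. s * (c ! i - c' ! i)) [0..<?d]"
    have sK: "s \<in> K" unfolding s_def using sf_props(6)[OF sf sf_props(7)[OF sf cdK(2) cdK(1)]] .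
    have pK: "p \<in> Kvecs K ?d" unfolding p_def
    proof (rule Kvecs_map_upt)
      fix i assume "i < ?d"
      then have ci: "c ! i \<in> K" "c' ! i \<in> K" using c c' lc lc' unfolding Kvecs_def by auto
      show "s * (c ! i - c' ! i) \<in> K" using sf_props(4)[OF sf sK sf_props(7)[OF sf ci]] .
    qed
    have diff: "comb B (take ?d c) - comb B (take ?d c') = (c' ! ?d - c ! ?d) * x"
      using eq2 by (simp add: algebra_simps)
    have "comb B p = (\<Sum>i<?d. s * (c ! i * B ! i - c' ! i * B ! i))"
      unfolding comb_def p_def by (intro sum.cong) (auto simp: algebra_simps)
    also have "\<dots> = s * ((\<Sum>i<?d. c ! i * B ! i) - (\<Sum>i<?d. c' ! i * B ! i))"
      by (simp add: sum_distrib_left[symmetric] sum_subtractf)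
    also have "\<dots> = s * (comb B (take ?d c) - comb B (take ?d c'))"
      unfolding comb_def by simp
    also have "\<dots> = s * ((c' ! ?d - c ! ?d) * x)" by (simp only: diff)
    finally have cb: "comb B p = s * ((c' ! ?d - c ! ?d) * x)" .
    have nz: "c' ! ?d - c ! ?d \<noteq> 0" using False by auto
    have "s * (c' ! ?d - c ! ?d) = 1" unfolding s_def using nz by (rule left_inverse)
    then have cbx: "comb B p = x" using cb by (metis mult.assoc mult_1)
    have "x \<in> comb B ` Kvecs K ?d" using cbx pK by (intro image_eqI[of x "comb B" p]) auto
    with x show ?thesis by (rule notE)
  qed
qed

lemma exists_indep:
  assumes sf: "is_subfield K" and fin: "finite (UNIV :: 'a::field set)"
    and card: "card (UNIV :: 'a set) = card K ^ m" and "d \<le> m"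
  shows "\<exists>B::'a list. length B = d \<and> inj_on (comb B) (Kvecs K d)"
  using assms(4)
proof (induction d)
  case 0
  show ?case by (rule exI[of _ "[]"]) (auto simp: Kvecs_def inj_on_def)
next
  case (Suc d)
  then obtain B :: "'a list" where B: "length B = d" "inj_on (comb B) (Kvecs K d)" by auto
  have finK: "finite K" using finite_subset[OF subset_UNIV fin] .
  have "{0,1} \<subseteq> K" using sf_props(1,2)[OF sf] by simp
  then have "card {0::'a,1} \<le> card K" using finK card_mono by blast
  then have K2: "card K \<ge> 2" by simp
  have "card (comb B ` Kvecs K d) = card K ^ d"
    using card_image[OF B(2)] card_Kvecs[OF finK] by simp
  also have "\<dots> < card K ^ m" using K2 Suc.prems by (intro power_strict_increasing) auto
  finally have "comb B ` Kvecs K d \<noteq> UNIV" using card by auto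
  then obtain x where x: "x \<notin> comb B ` Kvecs K d" by blast
  show ?case
    using ind_step[OF sf, of B x] B x by (intro exI[of _ "B @ [x]"]) simp
qed

lemma exists_basis:
  assumes sf: "is_subfield K" and fin: "finite (UNIV :: 'a::field set)"
    and card: "card (UNIV :: 'a set) = card K ^ m"
  shows "\<exists>B::'a list. is_basis K m B"
proof -
  obtain B :: "'a list" where B: "length B = m" "inj_on (comb B) (Kvecs K m)"
    using exists_indep[OF sf fin card, of m] by auto
  have finK: "finite K" using finite_subset[OF subset_UNIV fin] .
  have "card (comb B ` Kvecs K m) = card (UNIV :: 'a set)"
    using card_image[OF B(2)] card_Kvecs[OF finK] card by simp
  then have surj: "comb B ` Kvecs K m = UNIV" using fin by (intro card_subset_eq) auto
  show ?thesis unfolding is_basis_def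
  proof (intro exI[of _ B] conjI allI B(1))
    fix x :: 'a
    have "x \<in> comb B ` Kvecs K m" using surj by simp
    then obtain c where c: "c \<in> Kvecs K m" "x = comb B c" by (rule imageE) simp
    show "\<exists>!c. c \<in> Kvecs K m \<and> x = (\<Sum>i<m. c ! i * B ! i)"
    proof (rule ex1I[of _ c])
      show "c \<in> Kvecs K m \<and> x = (\<Sum>i<m. c ! i * B ! i)" using c B by (simp add: comb_def)
      fix c' assume "c' \<in> Kvecs K m \<and> x = (\<Sum>i<m. c' ! i * B ! i)"
      then have "c' \<in> Kvecs K m" "comb B c' = comb B c" using c B by (auto simp: comb_def)
      then show "c' = c" using c(1) inj_onD[OF B(2)] by blast
    qed
  qed
qed



lemma Kvecs_iff: "c \<in> Kvecs K m \<longleftrightarrow> length c = m \<and> (\<forall>i<m. c ! i \<in> K)"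
  unfolding Kvecs_def by (auto simp: in_set_conv_nth) (meson nth_mem subsetD)

lemma basis_len: "is_basis K m B \<Longrightarrow> length B = m"
  unfolding is_basis_def by simp

lemma phi_prop:
  assumes bas: "is_basis K m B"
  shows "phi K B x \<in> Kvecs K m \<and> x = (\<Sum>i<m. phi K B x ! i * B ! i)"
proof -
  have ex: "\<exists>!c. c \<in> Kvecs K m \<and> x = (\<Sum>i<m. c ! i * B ! i)"
    using bas unfolding is_basis_def by blast
  show ?thesis unfolding phi_def basis_len[OF bas] by (rule theI'[OF ex])
qed

lemma phi_unique:
  assumes bas: "is_basis K m B" and c: "c \<in> Kvecs K m" and x: "x = (\<Sum>i<m. c ! i * B ! i)"
  shows "phi K B x = c"
proof -
  have ex: "\<exists>!c. c \<in> Kvecs K m \<and> x = (\<Sum>i<m. c ! i * B ! i)"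
    using bas unfolding is_basis_def by blast
  show ?thesis unfolding phi_def basis_len[OF bas] by (rule the1_equality[OF ex]) (use c x in simp)
qed

lemma phi_inj:
  assumes bas: "is_basis K m B" and eq: "phi K B x = phi K B y"
  shows "x = y"
proof -
  have "x = (\<Sum>i<m. phi K B x ! i * B ! i)" using phi_prop[OF bas] by blast
  also have "\<dots> = (\<Sum>i<m. phi K B y ! i * B ! i)" unfolding eq ..
  also have "\<dots> = y" using phi_prop[OF bas, of y] by simp
  finally show ?thesis .
qed

lemma phi_smult:
  assumes sf: "is_subfield K" and bas: "is_basis K m B" and t: "t \<in> K"
  shows "phi K B (t * x) = map ((*) t) (phi K B x)"
proof (rule phi_unique[OF bas])
  have px: "phi K B x \<in> Kvecs K m" and xs: "x = (\<Sum>i<m. phi K B x ! i * B ! i)"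
    using phi_prop[OF bas, of x] by auto
  then have lp: "length (phi K B x) = m" and pK: "\<forall>i<m. phi K B x ! i \<in> K"
    by (auto simp: Kvecs_iff)
  show "map ((*) t) (phi K B x) \<in> Kvecs K m"
    unfolding Kvecs_iff using lp pK sf_props(4)[OF sf t] by simp
  have "t * x = (\<Sum>i<m. t * (phi K B x ! i * B ! i))"
    by (subst xs) (simp add: sum_distrib_left)
  also have "\<dots> = (\<Sum>i<m. map ((*) t) (phi K B x) ! i * B ! i)"
    using lp by (intro sum.cong) simp_all
  finally show "t * x = (\<Sum>i<m. map ((*) t) (phi K B x) ! i * B ! i)" .
qed

lemma phi_add:
  assumes sf: "is_subfield K" and bas: "is_basis K m B"
  shows "phi K B (x + y) = map2 (+) (phi K B x) (phi K B y)"
proof (rule phi_unique[OF bas])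
  have px: "phi K B x \<in> Kvecs K m" and xs: "x = (\<Sum>i<m. phi K B x ! i * B ! i)"
    using phi_prop[OF bas, of x] by auto
  have py: "phi K B y \<in> Kvecs K m" and ys: "y = (\<Sum>i<m. phi K B y ! i * B ! i)"
    using phi_prop[OF bas, of y] by auto
  have lx: "length (phi K B x) = m" and xK: "\<forall>i<m. phi K B x ! i \<in> K"
    using px by (auto simp: Kvecs_iff)
  have ly: "length (phi K B y) = m" and yK: "\<forall>i<m. phi K B y ! i \<in> K"
    using py by (auto simp: Kvecs_iff)
  show "map2 (+) (phi K B x) (phi K B y) \<in> Kvecs K m"
    unfolding Kvecs_iff using lx ly xK yK sf_props(3)[OF sf] by simp
  have "x + y = (\<Sum>i<m. phi K B x ! i * B ! i + phi K B y ! i * B ! i)"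
    by (subst xs, subst ys) (simp add: sum.distrib)
  also have "\<dots> = (\<Sum>i<m. map2 (+) (phi K B x) (phi K B y) ! i * B ! i)"
    using lx ly by (intro sum.cong) (simp_all add: algebra_simps)
  finally show "x + y = (\<Sum>i<m. map2 (+) (phi K B x) (phi K B y) ! i * B ! i)" .
qed



lemma sel:
  fixes \<psi> :: "'a::field \<Rightarrow> 'a list"
  assumes sf: "is_subfield K" and uu: "uu < m"
    and pin: "\<And>z. \<psi> z \<in> Kvecs K m"
    and pinj: "\<And>z z'. \<psi> z = \<psi> z' \<Longrightarrow> z = z'"
    and psm: "\<And>t z. t \<in> K \<Longrightarrow> \<psi> (t * z) = map ((*) t) (\<psi> z)"
    and psurj: "\<And>v. v \<in> Kvecs K m \<Longrightarrow> \<exists>z. \<psi> z = v"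
  shows "\<exists>w. w \<noteq> 0 \<and> (\<forall>z. ((\<forall>l<m. l \<noteq> uu \<longrightarrow> \<psi> z ! l = 0) \<longleftrightarrow> z / w \<in> K)
            \<and> ((\<forall>l<m. l \<noteq> uu \<longrightarrow> \<psi> z ! l = 0) \<longrightarrow> \<psi> z ! uu = z / w))"
proof -
  define e :: "'a list" where "e = map (\<lambda>l. if l = uu then 1 else 0) [0..<m]"
  have eK: "e \<in> Kvecs K m" unfolding e_def
    by (rule Kvecs_map_upt) (simp add: sf_props(1,2)[OF sf])
  have le: "length e = m" unfolding e_def by simp
  have euu: "e ! uu = 1" unfolding e_def using uu by simp
  have eo: "\<And>l. l < m \<Longrightarrow> l \<noteq> uu \<Longrightarrow> e ! l = 0" unfolding e_def by simp
  obtain w where w: "\<psi> w = e" using psurj[OF eK] by blast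
  have lp: "\<And>z. length (\<psi> z) = m" using pin by (simp add: Kvecs_iff)
  have pK: "\<And>z l. l < m \<Longrightarrow> \<psi> z ! l \<in> K" using pin by (simp add: Kvecs_iff)
  have w0: "w \<noteq> 0"
  proof
    assume "w = 0"
    have "\<psi> 0 = \<psi> (0 * 0)" by simp
    also have "\<dots> = map ((*) 0) (\<psi> 0)" by (rule psm[OF sf_props(1)[OF sf]])
    finally have "\<psi> 0 ! uu = 0" using lp[of 0] uu by (metis mult_zero_left nth_map)
    then show False using \<open>w = 0\<close> w euu by simp
  qed
  have key: "\<And>t. t \<in> K \<Longrightarrow> \<psi> (t * w) = map ((*) t) e" using psm w by simp
  show ?thesis
  proof (intro exI[of _ w] conjI w0 allI)
    fix z
    let ?c = "\<forall>l<m. l \<noteq> uu \<longrightarrow> \<psi> z ! l = 0"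
    have dir1: "z / w \<in> K \<and> \<psi> z ! uu = z / w" if c: ?c
    proof -
      define t where "t = \<psi> z ! uu"
      have tK: "t \<in> K" unfolding t_def using pK uu .
      have "\<psi> z = map ((*) t) e"
      proof (rule nth_equalityI)
        show "length (\<psi> z) = length (map ((*) t) e)" using lp le by simp
        fix l assume "l < length (\<psi> z)"
        then have l: "l < m" using lp by simp
        show "\<psi> z ! l = map ((*) t) e ! l"
        proof (cases "l = uu")
          case True then show ?thesis using le l euu t_def by simp
        next
          case False then show ?thesis using le l eo c by simp
        qed
      qed
      then have "\<psi> z = \<psi> (t * w)" using key[OF tK] by simp
      then have "z = t * w" by (rule pinj)
      then have "z / w = t" using w0 by simp
      then show ?thesis using tK t_def by simp
    qed
    have dir2: ?c if zw: "z / w \<in> K"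
    proof -
      have "z = (z / w) * w" using w0 by simp
      then have "\<psi> z = map ((*) (z / w)) e" using key[OF zw] by metis
      then show ?c using le eo by simp
    qed
    show "?c \<longleftrightarrow> z / w \<in> K" using dir1 dir2 by blast
    show "?c \<longrightarrow> \<psi> z ! uu = z / w" using dir1 by blast
  qed
qed



lemma E_char:
  assumes la: "length a = n" and pin: "\<And>j. j < n \<Longrightarrow> inv \<pi> j < n"
  shows "x \<in> S_u n m u (mon n f \<pi> (Im_q K B (RS a k))) \<longleftrightarrow>
    (\<exists>g. degree g < k \<and>
       (\<forall>j<n. \<forall>l<m. l \<noteq> u j \<longrightarrow> f (inv \<pi> j) (phi K B (poly g (a ! inv \<pi> j))) ! l = 0) \<and>
       x = map (\<lambda>j. f (inv \<pi> j) (phi K B (poly g (a ! inv \<pi> j))) ! u j) [0..<n])"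
  (is "?L \<longleftrightarrow> ?R")
proof
  assume ?L
  then obtain X where x: "x = map (\<lambda>j. X ! j ! u j) [0..<n]" and X: "X \<in> mon n f \<pi> (Im_q K B (RS a k))"
    and cX: "\<forall>j<n. \<forall>l<m. l \<noteq> u j \<longrightarrow> X ! j ! l = 0"
    unfolding S_u_def by blast
  from X obtain Y where XY: "X = map (\<lambda>j. f (inv \<pi> j) (Y ! inv \<pi> j)) [0..<n]"
    and Y: "Y \<in> Im_q K B (RS a k)" unfolding mon_def by blast
  from Y obtain c where Yc: "Y = map (phi K B) c" and c: "c \<in> RS a k" unfolding Im_q_def by blast
  from c obtain g where cg: "c = map (poly g) a" and g: "degree g < k" unfolding RS_def by blast
  have Xj: "X ! j = f (inv \<pi> j) (phi K B (poly g (a ! inv \<pi> j)))" if j: "j < n" for j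
    using j pin[OF j] la by (simp add: XY Yc cg)
  show ?R
  proof (intro exI[of _ g] conjI g)
    show "\<forall>j<n. \<forall>l<m. l \<noteq> u j \<longrightarrow> f (inv \<pi> j) (phi K B (poly g (a ! inv \<pi> j))) ! l = 0"
      using cX Xj by simp
    show "x = map (\<lambda>j. f (inv \<pi> j) (phi K B (poly g (a ! inv \<pi> j))) ! u j) [0..<n]"
      unfolding x by (rule map_cong) (simp_all add: Xj)
  qed
next
  assume ?R
  then obtain g where g: "degree g < k"
    and cg: "\<forall>j<n. \<forall>l<m. l \<noteq> u j \<longrightarrow> f (inv \<pi> j) (phi K B (poly g (a ! inv \<pi> j))) ! l = 0"
    and x: "x = map (\<lambda>j. f (inv \<pi> j) (phi K B (poly g (a ! inv \<pi> j))) ! u j) [0..<n]" by blast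
  define c where "c = map (poly g) a"
  define Y where "Y = map (phi K B) c"
  define X where "X = map (\<lambda>j. f (inv \<pi> j) (Y ! inv \<pi> j)) [0..<n]"
  have c: "c \<in> RS a k" unfolding RS_def c_def using g by blast
  have Y: "Y \<in> Im_q K B (RS a k)" unfolding Im_q_def Y_def using c by blast
  have X: "X \<in> mon n f \<pi> (Im_q K B (RS a k))" unfolding mon_def X_def using Y by blast
  have Xj: "X ! j = f (inv \<pi> j) (phi K B (poly g (a ! inv \<pi> j)))" if j: "j < n" for j
    using j pin[OF j] la by (simp add: X_def Y_def c_def)
  have cX: "\<forall>j<n. \<forall>l<m. l \<noteq> u j \<longrightarrow> X ! j ! l = 0" using cg Xj by simp
  have xX: "x = map (\<lambda>j. X ! j ! u j) [0..<n]"
    unfolding x by (rule map_cong) (simp_all add: Xj)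
  show ?L unfolding S_u_def using xX X cX by blast
qed



lemma dir1:
  fixes K :: "'a::field set"
  assumes sf: "is_subfield K" and m1: "m \<ge> 1" and RS: "is_RS n C"
    and gss: "is_gen_subfield_subcode K m n C E"
  shows "\<exists>D. is_GRS n D \<and> E = alternant K D"
proof -
  obtain a k where la: "length a = n" and da: "distinct a" and k1: "1 \<le> k" and kn: "k \<le> n"
    and C: "C = RS a k" using RS unfolding is_RS_def by blast
  obtain B u f \<pi> where bas: "is_basis K m B" and u: "\<forall>j<n. u j < m"
    and GL: "\<forall>i<n. is_GL K m (f i)" and perm: "\<pi> permutes {0..<n}"
    and E: "E = S_u n m u (mon n f \<pi> (Im_q K B C))"
    using gss unfolding is_gen_subfield_subcode_def by blast
  define \<psi> where "\<psi> i z = f i (phi K B z)" for i z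
  define P where "P i w \<longleftrightarrow> w \<noteq> 0 \<and> (\<forall>z. ((\<forall>l<m. l \<noteq> u (\<pi> i) \<longrightarrow> \<psi> i z ! l = 0) \<longleftrightarrow> z / w \<in> K)
            \<and> ((\<forall>l<m. l \<noteq> u (\<pi> i) \<longrightarrow> \<psi> i z ! l = 0) \<longrightarrow> \<psi> i z ! u (\<pi> i) = z / w))" for i w
  have sel_i: "\<exists>w. P i w"
    if i: "i \<in> {..<n}" for i
  proof -
    have iGL: "is_GL K m (f i)" using GL i by simp
    have bij: "bij_betw (f i) (Kvecs K m) (Kvecs K m)" using iGL unfolding is_GL_def by blast
    have hom: "\<forall>c\<in>K. \<forall>x\<in>Kvecs K m. f i (map ((*) c) x) = map ((*) c) (f i x)"
      using iGL unfolding is_GL_def by blast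
    have pi: "\<pi> i < n" using permutes_in_image[OF perm, of i] i by simp
    have ph: "\<And>z. phi K B z \<in> Kvecs K m" using phi_prop[OF bas] by blast
    show ?thesis unfolding P_def
    proof (rule sel[OF sf])
      show "u (\<pi> i) < m" using u pi by blast
      show "\<And>z. \<psi> i z \<in> Kvecs K m" unfolding \<psi>_def using bij_betw_apply[OF bij ph] .
      show "\<And>z z'. \<psi> i z = \<psi> i z' \<Longrightarrow> z = z'"
      proof -
        fix z z' assume "\<psi> i z = \<psi> i z'"
        then have "phi K B z = phi K B z'" unfolding \<psi>_def
          using inj_onD[OF bij_betw_imp_inj_on[OF bij] _ ph ph] by blast
        then show "z = z'" by (rule phi_inj[OF bas])
      qed
      show "\<And>t z. t \<in> K \<Longrightarrow> \<psi> i (t * z) = map ((*) t) (\<psi> i z)"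
        unfolding \<psi>_def using phi_smult[OF sf bas] hom ph by simp
      show "\<exists>z. \<psi> i z = v" if v: "v \<in> Kvecs K m" for v
      proof -
        have "v \<in> f i ` Kvecs K m" using bij_betw_imp_surj_on[OF bij] v by simp
        then obtain c where c: "c \<in> Kvecs K m" and vc: "v = f i c" by blast
        have "phi K B (\<Sum>l<m. c ! l * B ! l) = c" by (rule phi_unique[OF bas c refl])
        then show ?thesis unfolding \<psi>_def vc by (intro exI[of _ "\<Sum>l<m. c ! l * B ! l"]) simp
      qed
    qed
  qed
  then have "\<forall>i\<in>{..<n}. \<exists>w. P i w" by blast
  from bchoice[OF this] obtain W where W: "\<forall>i\<in>{..<n}. P i (W i)" by blast
  define \<pi>' where "\<pi>' = inv \<pi>"
  have pi'n: "\<And>j. j < n \<Longrightarrow> \<pi>' j < n"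
    using permutes_in_image[OF permutes_inv[OF perm]] unfolding \<pi>'_def by simp
  have pipi': "\<And>j. \<pi> (\<pi>' j) = j" unfolding \<pi>'_def using permutes_inverses(1)[OF perm] by blast
  have inj': "inj \<pi>'" unfolding \<pi>'_def using permutes_inj[OF permutes_inv[OF perm]] .
  define h where "h g j = poly g (a ! \<pi>' j) / W (\<pi>' j)" for g j
  define a' where "a' = map (\<lambda>j. a ! \<pi>' j) [0..<n]"
  define v' where "v' = map (\<lambda>j. inverse (W (\<pi>' j))) [0..<n]"
  define D where "D = GRS a' v' k"
  have Wj: "((\<forall>l<m. l \<noteq> u j \<longrightarrow> \<psi> (\<pi>' j) z ! l = 0) \<longleftrightarrow> z / W (\<pi>' j) \<in> K)
            \<and> ((\<forall>l<m. l \<noteq> u j \<longrightarrow> \<psi> (\<pi>' j) z ! l = 0) \<longrightarrow> \<psi> (\<pi>' j) z ! u j = z / W (\<pi>' j))" if j: "j < n" for j z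
  proof -
    have "P (\<pi>' j) (W (\<pi>' j))" using W pi'n[OF j] by simp
    then show ?thesis unfolding P_def pipi' by blast
  qed
  have W0: "W (\<pi>' j) \<noteq> 0" if j: "j < n" for j
  proof -
    have "P (\<pi>' j) (W (\<pi>' j))" using W pi'n[OF j] by simp
    then show "W (\<pi>' j) \<noteq> 0" unfolding P_def by blast
  qed
  have la': "length a' = n" unfolding a'_def by simp
  have lv': "length v' = n" unfolding v'_def by simp
  have da': "distinct a'" unfolding a'_def distinct_conv_nth
  proof (intro allI impI)
    fix i j assume i: "i < length (map (\<lambda>j. a ! \<pi>' j) [0..<n])"
      and j: "j < length (map (\<lambda>j. a ! \<pi>' j) [0..<n])" and ij: "i \<noteq> j"
    have "\<pi>' i \<noteq> \<pi>' j" using inj' ij by (meson injD)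
    then have "a ! \<pi>' i \<noteq> a ! \<pi>' j" using da la pi'n i j by (simp add: nth_eq_iff_index_eq)
    then show "map (\<lambda>j. a ! \<pi>' j) [0..<n] ! i \<noteq> map (\<lambda>j. a ! \<pi>' j) [0..<n] ! j" using i j by simp
  qed
  have v0: "0 \<notin> set v'" unfolding v'_def using W0 by auto
  have GRS: "is_GRS n D" unfolding is_GRS_def D_def using la' lv' da' v0 k1 kn by blast
  have Eeq: "E = alternant K D"
  proof (rule set_eqI)
    fix x
    have "x \<in> E \<longleftrightarrow> (\<exists>g. degree g < k \<and>
       (\<forall>j<n. \<forall>l<m. l \<noteq> u j \<longrightarrow> \<psi> (\<pi>' j) (poly g (a ! \<pi>' j)) ! l = 0) \<and>
       x = map (\<lambda>j. \<psi> (\<pi>' j) (poly g (a ! \<pi>' j)) ! u j) [0..<n])"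
      unfolding E C \<psi>_def \<pi>'_def by (rule E_char[OF la]) (use pi'n in \<open>simp add: \<pi>'_def\<close>)
    also have "\<dots> \<longleftrightarrow> (\<exists>g. degree g < k \<and> (\<forall>j<n. h g j \<in> K) \<and> x = map (h g) [0..<n])"
    proof (intro ex_cong1 conj_cong refl)
      fix g
      show "(\<forall>j<n. \<forall>l<m. l \<noteq> u j \<longrightarrow> \<psi> (\<pi>' j) (poly g (a ! \<pi>' j)) ! l = 0) \<longleftrightarrow> (\<forall>j<n. h g j \<in> K)"
        unfolding h_def using Wj by blast
      assume "\<forall>j<n. h g j \<in> K"
      then have "\<forall>j<n. \<forall>l<m. l \<noteq> u j \<longrightarrow> \<psi> (\<pi>' j) (poly g (a ! \<pi>' j)) ! l = 0"
        unfolding h_def using Wj by blast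
      then have "\<And>j. j < n \<Longrightarrow> \<psi> (\<pi>' j) (poly g (a ! \<pi>' j)) ! u j = h g j"
        unfolding h_def using Wj by blast
      then have "map (\<lambda>j. \<psi> (\<pi>' j) (poly g (a ! \<pi>' j)) ! u j) [0..<n] = map (h g) [0..<n]"
        by (intro map_cong) simp_all
      then show "x = map (\<lambda>j. \<psi> (\<pi>' j) (poly g (a ! \<pi>' j)) ! u j) [0..<n] \<longleftrightarrow> x = map (h g) [0..<n]"
        by (simp only:)
    qed
    also have "\<dots> \<longleftrightarrow> x \<in> alternant K D"
    proof -
      have mg: "map2 (*) v' (map (poly g) a') = map (h g) [0..<n]" for g
        unfolding v'_def a'_def h_def by (rule nth_equalityI) (simp_all add: divide_inverse mult.commute)
      have sK: "set (map (h g) [0..<n]) \<subseteq> K \<longleftrightarrow> (\<forall>j<n. h g j \<in> K)" for g by auto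
      have "x \<in> alternant K D \<longleftrightarrow> (\<exists>g. degree g < k \<and> x = map (h g) [0..<n] \<and> set (map (h g) [0..<n]) \<subseteq> K)"
        unfolding alternant_def D_def GRS_def mg by blast
      then show ?thesis unfolding sK by blast
    qed
    finally show "x \<in> E \<longleftrightarrow> x \<in> alternant K D" .
  qed
  show ?thesis using GRS Eeq by blast
qed



lemma comb_phi: "is_basis K m B \<Longrightarrow> (\<Sum>l<m. phi K B z ! l * B ! l) = z"
  using phi_prop[of K m B z] by simp

lemma phi_comb: "is_basis K m B \<Longrightarrow> x \<in> Kvecs K m \<Longrightarrow> phi K B (\<Sum>l<m. x ! l * B ! l) = x"
  by (rule phi_unique) auto

lemma GL_mult:
  assumes sf: "is_subfield K" and bas: "is_basis K m B" and s: "s \<noteq> 0"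
  shows "is_GL K m (\<lambda>x. phi K B (s * (\<Sum>l<m. x ! l * B ! l)))"
  unfolding is_GL_def
proof (intro conjI ballI)
  let ?g = "\<lambda>x. phi K B (s * (\<Sum>l<m. x ! l * B ! l))"
  let ?c = "\<lambda>x. (\<Sum>l<m. x ! l * B ! l)"
  show "bij_betw ?g (Kvecs K m) (Kvecs K m)"
  proof (rule bij_betwI')
    fix x y assume x: "x \<in> Kvecs K m" and y: "y \<in> Kvecs K m"
    show "(?g x = ?g y) = (x = y)"
    proof
      assume "?g x = ?g y"
      then have "s * ?c x = s * ?c y" by (rule phi_inj[OF bas])
      then have cxy: "?c x = ?c y" using s by simp
      have "x = phi K B (?c x)" using phi_comb[OF bas x] by simp
      also have "\<dots> = phi K B (?c y)" unfolding cxy ..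
      also have "\<dots> = y" using phi_comb[OF bas y] by simp
      finally show "x = y" .
    qed simp
  next
    fix x show "?g x \<in> Kvecs K m" using phi_prop[OF bas] by blast
  next
    fix y assume y: "y \<in> Kvecs K m"
    define x where "x = phi K B (?c y / s)"
    have xK: "x \<in> Kvecs K m" unfolding x_def using phi_prop[OF bas] by blast
    have "?g x = phi K B (s * (?c y / s))" unfolding x_def comb_phi[OF bas] ..
    also have "\<dots> = y" using s phi_comb[OF bas y] by simp
    finally show "\<exists>x\<in>Kvecs K m. y = ?g x" using xK by metis
  qed
next
  let ?c = "\<lambda>x. (\<Sum>l<m. x ! l * B ! l)"
  fix x y assume x: "x \<in> Kvecs K m" and y: "y \<in> Kvecs K m"
  have lx: "length x = m" and ly: "length y = m" using x y by (auto simp: Kvecs_iff)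
  have "?c (map2 (+) x y) = ?c x + ?c y"
    using lx ly by (simp add: sum.distrib[symmetric] algebra_simps)
  then have "s * ?c (map2 (+) x y) = s * ?c x + s * ?c y" by (simp add: algebra_simps)
  then show "phi K B (s * ?c (map2 (+) x y)) = map2 (+) (phi K B (s * ?c x)) (phi K B (s * ?c y))"
    using phi_add[OF sf bas] by simp
next
  let ?c = "\<lambda>x. (\<Sum>l<m. x ! l * B ! l)"
  fix t x assume t: "t \<in> K" and x: "x \<in> Kvecs K m"
  have lx: "length x = m" using x by (auto simp: Kvecs_iff)
  have "?c (map ((*) t) x) = t * ?c x"
    using lx by (simp add: sum_distrib_left algebra_simps)
  then have e: "s * ?c (map ((*) t) x) = t * (s * ?c x)" by (simp add: algebra_simps)
  show "phi K B (s * ?c (map ((*) t) x)) = map ((*) t) (phi K B (s * ?c x))"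
    unfolding e by (rule phi_smult[OF sf bas t])
qed



lemma dir2:
  fixes K :: "'a::field set"
  assumes sf: "is_subfield K" and m1: "m \<ge> 1" and fin: "finite (UNIV :: 'a set)"
    and card: "card (UNIV :: 'a set) = card K ^ m" and GRS: "is_GRS n D"
  shows "\<exists>C. is_RS n C \<and> is_gen_subfield_subcode K m n C (alternant K D)"
proof -
  obtain a v k where la: "length a = n" and da: "distinct a" and k1: "1 \<le> k" and kn: "k \<le> n"
    and lv: "length v = n" and v0: "0 \<notin> set v" and D: "D = GRS a v k"
    using GRS unfolding is_GRS_def by blast
  obtain B where bas: "is_basis K m B" using exists_basis[OF sf fin card] by blast
  define b0 where "b0 = B ! 0"
  define e0 :: "'a list" where "e0 = map (\<lambda>l. if l = 0 then 1 else 0) [0..<m]"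
  have e0K: "e0 \<in> Kvecs K m" unfolding e0_def
    by (rule Kvecs_map_upt) (simp add: sf_props(1,2)[OF sf])
  have le0: "length e0 = m" unfolding e0_def by simp
  have e00: "e0 ! 0 = 1" unfolding e0_def using m1 by simp
  have e0l: "\<And>l. l < m \<Longrightarrow> l \<noteq> 0 \<Longrightarrow> e0 ! l = 0" unfolding e0_def by simp
  have "(\<Sum>i<m. e0 ! i * B ! i) = (\<Sum>i<m. if i = 0 then B ! i else 0)"
    by (rule sum.cong) (simp_all add: e0_def)
  also have "\<dots> = b0" unfolding b0_def using m1 by (simp add: sum.delta)
  finally have pb0: "phi K B b0 = e0" using phi_unique[OF bas e0K] by simp
  have b00: "b0 \<noteq> 0"
  proof
    assume "b0 = 0"
    have "phi K B 0 = phi K B (0 * 0)" by simp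
    also have "\<dots> = map ((*) 0) (phi K B 0)" by (rule phi_smult[OF sf bas sf_props(1)[OF sf]])
    finally have p0: "phi K B 0 = map ((*) 0) (phi K B 0)" .
    have "length (phi K B 0) = m" using phi_prop[OF bas, of 0] by (simp add: Kvecs_iff)
    then have "0 < length (phi K B 0)" using m1 by simp
    then have "map ((*) 0) (phi K B 0) ! 0 = 0" by simp
    then have "phi K B 0 ! 0 = 0" using p0 by simp
    then show False using \<open>b0 = 0\<close> pb0 e00 by simp
  qed
  have vj: "v ! j \<noteq> 0" if "j < n" for j using v0 lv that by (metis nth_mem)
  define s where "s j = v ! j * b0" for j
  have s0: "s j \<noteq> 0" if "j < n" for j unfolding s_def using vj[OF that] b00 by simp
  define f where "f j = (\<lambda>x. phi K B (s j * (\<Sum>l<m. x ! l * B ! l)))" for j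
  have GL: "\<forall>i<n. is_GL K m (f i)" unfolding f_def using GL_mult[OF sf bas s0] by blast
  have fphi: "f j (phi K B z) = phi K B (s j * z)" for j z unfolding f_def comb_phi[OF bas] ..
  define Q where "Q j z \<longleftrightarrow> (\<forall>l<m. l \<noteq> 0 \<longrightarrow> phi K B (s j * z) ! l = 0)" for j z
  have selj: "(Q j z \<longleftrightarrow> z * v ! j \<in> K) \<and> (Q j z \<longrightarrow> phi K B (s j * z) ! 0 = z * v ! j)"
    if j: "j < n" for j z
  proof -
    have "\<exists>w. w \<noteq> 0 \<and> (\<forall>z. ((\<forall>l<m. l \<noteq> 0 \<longrightarrow> phi K B (s j * z) ! l = 0) \<longleftrightarrow> z / w \<in> K)
            \<and> ((\<forall>l<m. l \<noteq> 0 \<longrightarrow> phi K B (s j * z) ! l = 0) \<longrightarrow> phi K B (s j * z) ! 0 = z / w))"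
    proof (rule sel[OF sf])
      show "0 < m" using m1 by simp
      show "\<And>z. phi K B (s j * z) \<in> Kvecs K m" using phi_prop[OF bas] by blast
      show "z = z'" if "phi K B (s j * z) = phi K B (s j * z')" for z z'
        using phi_inj[OF bas that] s0[OF j] by simp
      show "phi K B (s j * (t * z)) = map ((*) t) (phi K B (s j * z))" if t: "t \<in> K" for t z
      proof -
        have "s j * (t * z) = t * (s j * z)" by (simp add: algebra_simps)
        then show ?thesis using phi_smult[OF sf bas t] by metis
      qed
      show "\<exists>z. phi K B (s j * z) = y" if y: "y \<in> Kvecs K m" for y
      proof (intro exI)
        show "phi K B (s j * ((\<Sum>l<m. y ! l * B ! l) / s j)) = y"
          using s0[OF j] phi_comb[OF bas y] by simp
      qed
    qed
    then obtain w where w0: "w \<noteq> 0" and w: "\<And>z. (Q j z \<longleftrightarrow> z / w \<in> K) \<and> (Q j z \<longrightarrow> phi K B (s j * z) ! 0 = z / w)"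
      unfolding Q_def by blast
    define z0 where "z0 = inverse (v ! j)"
    have sz0: "s j * z0 = b0" unfolding s_def z0_def using vj[OF j] by simp
    have "Q j z0" unfolding Q_def sz0 pb0 using e0l by simp
    then have "phi K B (s j * z0) ! 0 = z0 / w" using w[of z0] by blast
    then have "1 = z0 / w" unfolding sz0 pb0 e00 .
    then have wz: "w = z0" using w0 by (simp add: field_simps)
    have zz: "z / w = z * v ! j" for z unfolding wz z0_def by (simp add: divide_inverse)
    show ?thesis using w[of z] unfolding zz .
  qed
  define E where "E = S_u n m (\<lambda>_. 0) (mon n f id (Im_q K B (RS a k)))"
  have Eeq: "E = alternant K D"
  proof (rule set_eqI)
    fix x
    have "x \<in> E \<longleftrightarrow> (\<exists>g. degree g < k \<and>
       (\<forall>j<n. \<forall>l<m. l \<noteq> 0 \<longrightarrow> f (inv id j) (phi K B (poly g (a ! inv id j))) ! l = 0) \<and>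
       x = map (\<lambda>j. f (inv id j) (phi K B (poly g (a ! inv id j))) ! 0) [0..<n])"
      unfolding E_def by (rule E_char[OF la]) (simp add: inv_id)
    also have "\<dots> \<longleftrightarrow> (\<exists>g. degree g < k \<and> (\<forall>j<n. Q j (poly g (a ! j))) \<and>
       x = map (\<lambda>j. phi K B (s j * poly g (a ! j)) ! 0) [0..<n])"
      unfolding inv_id id_apply fphi Q_def ..
    also have "\<dots> \<longleftrightarrow> (\<exists>g. degree g < k \<and> (\<forall>j<n. poly g (a ! j) * v ! j \<in> K) \<and>
       x = map (\<lambda>j. poly g (a ! j) * v ! j) [0..<n])"
    proof (intro ex_cong1 conj_cong refl)
      fix g
      show "(\<forall>j<n. Q j (poly g (a ! j))) \<longleftrightarrow> (\<forall>j<n. poly g (a ! j) * v ! j \<in> K)"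
        using selj by blast
      assume "\<forall>j<n. poly g (a ! j) * v ! j \<in> K"
      then have "\<And>j. j < n \<Longrightarrow> phi K B (s j * poly g (a ! j)) ! 0 = poly g (a ! j) * v ! j"
        using selj by blast
      then have "map (\<lambda>j. phi K B (s j * poly g (a ! j)) ! 0) [0..<n] = map (\<lambda>j. poly g (a ! j) * v ! j) [0..<n]"
        by (intro map_cong) simp_all
      then show "x = map (\<lambda>j. phi K B (s j * poly g (a ! j)) ! 0) [0..<n] \<longleftrightarrow> x = map (\<lambda>j. poly g (a ! j) * v ! j) [0..<n]"
        by (simp only:)
    qed
    also have "\<dots> \<longleftrightarrow> x \<in> alternant K D"
    proof -
      let ?h = "\<lambda>g j. poly g (a ! j) * v ! j"
      have mg: "map2 (*) v (map (poly g) a) = map (?h g) [0..<n]" for g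
        using la lv by (intro nth_equalityI) (simp_all add: mult.commute)
      have sK: "set (map (?h g) [0..<n]) \<subseteq> K \<longleftrightarrow> (\<forall>j<n. ?h g j \<in> K)" for g by auto
      have "x \<in> alternant K D \<longleftrightarrow> (\<exists>g. degree g < k \<and> x = map (?h g) [0..<n] \<and> set (map (?h g) [0..<n]) \<subseteq> K)"
        unfolding alternant_def D GRS_def mg by blast
      then show ?thesis unfolding sK by blast
    qed
    finally show "x \<in> E \<longleftrightarrow> x \<in> alternant K D" .
  qed
  have RS: "is_RS n (RS a k)" unfolding is_RS_def using la da k1 kn by blast
  have "is_gen_subfield_subcode K m n (RS a k) E"
    unfolding is_gen_subfield_subcode_def E_def
    using bas GL permutes_id[of "{0..<n}"] m1 by (intro exI[of _ B] exI[of _ "\<lambda>_. 0"] exI[of _ f] exI[of _ id]) simp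
  then show ?thesis using RS Eeq by blast
qed


theorem corollary3:
  fixes K :: "'a::{field,finite} set" and m :: nat
  assumes "is_subfield K" and "m \<ge> 1" and "card (UNIV :: 'a set) = card K ^ m"
  shows "(\<forall>n C E. is_RS n C \<and> is_gen_subfield_subcode K m n C E
            \<longrightarrow> (\<exists>D. is_GRS n D \<and> E = alternant K D))
       \<and> (\<forall>n D. is_GRS n D
            \<longrightarrow> (\<exists>C. is_RS n C \<and> is_gen_subfield_subcode K m n C (alternant K D)))"
  using dir1[OF assms(1,2)] dir2[OF assms(1,2) finite_UNIV assms(3)] by blast

end
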